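(* Let $(\Sigma,E)$ be an algebraic theory and $(\Sigma^{\mathrm{s}},E^{\mathrm{s}})$ the associated theory. For all $\Sigma$-terms $t(v_1,\dots,v_n),s(v_1,\dots,v_n)$ over $\mathrm{Var}$: if $E\vdash t(v_1,\dots,v_n)=s(v_1,\dots,v_n)$, then $E^{\mathrm{s}}\vdash t(\mathsf{a}v_1,\dots,\mathsf{a}v_n)=s(\mathsf{a}v_1,\dots,\mathsf{a}v_n)$.
   Context: $\mathrm{Var}=\{v_1,v_2,\dots\}$ is a fixed set of variables; $E\vdash s=t$ means the equation is derivable from $E$ in equational logic (axioms, reflexivity, symmetry, transitivity, congruence, substitution). Given $(\Sigma,E)$, the theory $(\Sigma^{\mathrm{s}},E^{\mathrm{s}})$ has signature $\Sigma^{\mathrm{s}}=\Sigma\uplus\{\mathsf{a}:1\}$ and equations $E^{\mathrm{s}}$ consisting of: $\mathsf{a}\mathsf{a}v_1=\mathsf{a}v_1$; $\mathsf{a}(\mathsf{op}(v_1,\dots,v_n))=\mathsf{op}(v_1,\dots,v_n)$ and $\mathsf{op}(\mathsf{a}v_1,\dots,\mathsf{a}v_n)=\mathsf{op}(v_1,\dots,v_n)$ for every $(\mathsf{op}:n)\in\Sigma$; and $t(\mathsf{a}v_1,\dots,\mathsf{a}v_n)=s(\mathsf{a}v_1,\dots,\mathsf{a}v_n)$ for every equation $t(v_1,\dots,v_n)=s(v_1,\dots,v_n)$ in $E$. *)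

theory Defs
  imports Main
begin

text \<open>Terms over function symbols of type 'f and variables Var = {v_1, v_2, ...},
  where variable v_(i+1) is represented by V i.\<close>
datatype 'f trm = V nat | Fn 'f "'f trm list"

text \<open>A signature is an arity function; every element of the type 'f is a symbol.\<close>
fun wf_trm :: "('f \<Rightarrow> nat) \<Rightarrow> 'f trm \<Rightarrow> bool" where
  "wf_trm ar (V x) = True"
| "wf_trm ar (Fn f ts) = (length ts = ar f \<and> (\<forall>t\<in>set ts. wf_trm ar t))"

fun subst :: "(nat \<Rightarrow> 'f trm) \<Rightarrow> 'f trm \<Rightarrow> 'f trm" where
  "subst \<sigma> (V x) = \<sigma> x"
| "subst \<sigma> (Fn f ts) = Fn f (map (subst \<sigma>) ts)"

inductive derivable :: "('f \<Rightarrow> nat) \<Rightarrow> ('f trm \<times> 'f trm) set \<Rightarrow> 'f trm \<Rightarrow> 'f trm \<Rightarrow> bool"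
  for ar E where
  ax: "(s, t) \<in> E \<Longrightarrow> derivable ar E s t"
| refl: "wf_trm ar t \<Longrightarrow> derivable ar E t t"
| sym: "derivable ar E s t \<Longrightarrow> derivable ar E t s"
| trans: "derivable ar E s t \<Longrightarrow> derivable ar E t u \<Longrightarrow> derivable ar E s u"
| cong: "length ss = ar f \<Longrightarrow> list_all2 (derivable ar E) ss ts \<Longrightarrow>
           derivable ar E (Fn f ss) (Fn f ts)"
| inst: "derivable ar E s t \<Longrightarrow> (\<forall>x. wf_trm ar (\<sigma> x)) \<Longrightarrow>
           derivable ar E (subst \<sigma> s) (subst \<sigma> t)"

datatype 'f ext = Old 'f | Asym

fun ar_s :: "('f \<Rightarrow> nat) \<Rightarrow> 'f ext \<Rightarrow> nat" where
  "ar_s ar (Old f) = ar f"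
| "ar_s ar Asym = 1"

definition lift :: "'f trm \<Rightarrow> 'f ext trm" where
  "lift t = map_trm Old t"

definition aV :: "nat \<Rightarrow> 'f ext trm" where
  "aV i = Fn Asym [V i]"

definition a_inst :: "'f trm \<Rightarrow> 'f ext trm" where
  "a_inst t = subst aV (lift t)"

definition E_s :: "('f \<Rightarrow> nat) \<Rightarrow> ('f trm \<times> 'f trm) set \<Rightarrow> ('f ext trm \<times> 'f ext trm) set" where
  "E_s ar E =
     {(Fn Asym [Fn Asym [V 0]], Fn Asym [V 0])}
   \<union> {(Fn Asym [Fn (Old f) (map V [0..<ar f])], Fn (Old f) (map V [0..<ar f])) | f. True}
   \<union> {(Fn (Old f) (map aV [0..<ar f]), Fn (Old f) (map V [0..<ar f])) | f. True}
   \<union> {(a_inst t, a_inst s) | t s. (t, s) \<in> E}"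

end

theory Submission
  imports Defs
begin

abbreviation "Ds ar E \<equiv> derivable (ar_s ar) (E_s ar E)"

lemma derivable_wf:
  assumes "\<forall>(l, r)\<in>E. wf_trm ar l \<and> wf_trm ar r"
  shows "derivable ar E s t \<Longrightarrow> wf_trm ar s \<and> wf_trm ar t"
proof (induction rule: derivable.induct)
  case (cong ss f ts)
  then show ?case by (auto simp: list_all2_conv_all_nth in_set_conv_nth)
next
  case (inst s t \<sigma>)
  have w: "wf_trm ar (subst \<sigma> u)" if "wf_trm ar u" for u using that
  proof (induction u)
    case (V x) then show ?case using inst(2) by simp
  qed auto
  show ?case using inst(3) by (auto intro: w)
qed (use assms in auto)

lemma a_inst_V[simp]: "a_inst (V i) = aV i"
  by (simp add: a_inst_def lift_def)

lemma a_inst_Fn[simp]: "a_inst (Fn f ts) = Fn (Old f) (map a_inst ts)"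
  by (simp add: a_inst_def lift_def)

lemma wf_a_inst: "wf_trm ar t \<Longrightarrow> wf_trm (ar_s ar) (a_inst t)"
  by (induction t) (auto simp: aV_def)

lemma wf_lift: "wf_trm ar t \<Longrightarrow> wf_trm (ar_s ar) (lift t)"
  by (induction t) (auto simp: lift_def)

lemma lift_Fn[simp]: "lift (Fn f ts) = Fn (Old f) (map lift ts)"
  by (simp add: lift_def)
lemma lift_V[simp]: "lift (V i) = V i"
  by (simp add: lift_def)

lemma a_inst_subst: "a_inst (subst \<sigma> s) = subst (a_inst \<circ> \<sigma>) (lift s)"
  by (induction s) auto

lemma subst_a_inst: "subst \<rho> (a_inst s) = subst (\<lambda>i. Fn Asym [\<rho> i]) (lift s)"
  by (induction s) (auto simp: aV_def)

lemma subst_cong_der: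
  assumes "\<And>i. Ds ar E (\<rho>1 i) (\<rho>2 i)"
  shows "wf_trm (ar_s ar) t \<Longrightarrow> Ds ar E (subst \<rho>1 t) (subst \<rho>2 t)"
proof (induction t)
  case (V x)
  then show ?case using assms by simp
next
  case (Fn f ts)
  have "list_all2 (Ds ar E) (map (subst \<rho>1) ts) (map (subst \<rho>2) ts)"
    unfolding list_all2_conv_all_nth using Fn by simp
  then show ?case
    using Fn.prems by (simp add: derivable.cong)
qed

lemma aa_inst:
  assumes "wf_trm ar u"
  shows "Ds ar E (Fn Asym [a_inst u]) (a_inst u)"
proof (cases u)
  case (V i)
  have "Ds ar E (subst (\<lambda>_. V i) (Fn Asym [Fn Asym [V 0]])) (subst (\<lambda>_. V i) (Fn Asym [V 0]))"
  proof (rule derivable.inst[OF derivable.ax])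
    show "(Fn Asym [Fn Asym [V 0]], Fn Asym [V 0]) \<in> E_s ar E" unfolding E_s_def by blast
  qed simp
  then show ?thesis using V by (simp add: aV_def)
next
  case (Fn f us)
  define \<sigma> where "\<sigma> j = (if j < length us then a_inst (us ! j) else V 0)" for j
  have len: "length us = ar f" using assms Fn by simp
  have wf: "wf_trm (ar_s ar) (\<sigma> x)" for x
  proof (cases "x < length us")
    case True
    then have "us ! x \<in> set us" by (rule nth_mem)
    then have "wf_trm ar (us ! x)" using assms Fn by simp
    then show ?thesis using True by (simp add: \<sigma>_def wf_a_inst)
  qed (simp add: \<sigma>_def)
  have "Ds ar E (subst \<sigma> (Fn Asym [Fn (Old f) (map V [0..<ar f])])) (subst \<sigma> (Fn (Old f) (map V [0..<ar f])))"
  proof (rule derivable.inst[OF derivable.ax])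
    show "(Fn Asym [Fn (Old f) (map V [0..<ar f])], Fn (Old f) (map V [0..<ar f])) \<in> E_s ar E"
      unfolding E_s_def by blast
  qed (use wf in blast)
  moreover have "map \<sigma> [0..<ar f] = map a_inst us"
  proof -
    have "map \<sigma> [0..<length us] = map (\<lambda>j. a_inst (us ! j)) [0..<length us]"
      by (rule map_cong) (auto simp: \<sigma>_def)
    also have "\<dots> = map a_inst (map (\<lambda>j. us ! j) [0..<length us])" by simp
    also have "\<dots> = map a_inst us" by (simp only: map_nth)
    finally show ?thesis unfolding len .
  qed
  ultimately show ?thesis using Fn by (simp add: comp_def)
qed

theorem lemma7:
  fixes ar :: "'f \<Rightarrow> nat" and E :: "('f trm \<times> 'f trm) set" and t s :: "'f trm"
  assumes "\<forall>(l, r)\<in>E. wf_trm ar l \<and> wf_trm ar r"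
    and "wf_trm ar t" and "wf_trm ar s"
    and "derivable ar E t s"
  shows "derivable (ar_s ar) (E_s ar E) (a_inst t) (a_inst s)"
  using assms(4)
proof (induction rule: derivable.induct)
  case (ax s t)
  then show ?case by (auto intro!: derivable.ax simp: E_s_def)
next
  case (refl t)
  then show ?case by (auto intro!: derivable.refl wf_a_inst)
next
  case (sym s t)
  then show ?case by (blast intro: derivable.sym)
next
  case (trans s t u)
  then show ?case by (blast intro: derivable.trans)
next
  case (cong ss f ts)
  have "list_all2 (Ds ar E) (map a_inst ss) (map a_inst ts)"
    using cong(2) unfolding list_all2_conv_all_nth by simp
  then show ?case
    using cong(1) by (simp add: derivable.cong)
next
  case (inst s t \<sigma>)
  have wfs: "wf_trm ar s" and wft: "wf_trm ar t"
    using derivable_wf[OF assms(1) inst(1)] by auto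
  define \<tau> where "\<tau> = a_inst \<circ> \<sigma>"
  have wft': "wf_trm (ar_s ar) (\<tau> x)" for x using inst(2) by (simp add: \<tau>_def wf_a_inst)
  have 1: "Ds ar E (subst \<tau> (a_inst s)) (subst \<tau> (a_inst t))"
    by (rule derivable.inst[OF inst(3)]) (simp add: wft')
  have aa: "Ds ar E (Fn Asym [\<tau> i]) (\<tau> i)" for i
    unfolding \<tau>_def o_def using inst(2) by (intro aa_inst) auto
  have 2: "Ds ar E (subst (\<lambda>i. Fn Asym [\<tau> i]) (lift u)) (subst \<tau> (lift u))"
    if "wf_trm ar u" for u
    by (rule subst_cong_der[OF aa wf_lift[OF that]])
  have "Ds ar E (subst \<tau> (lift s)) (subst \<tau> (lift t))"
    using derivable.trans[OF derivable.trans[OF derivable.sym[OF 2[OF wfs]] 1[unfolded subst_a_inst]] 2[OF wft]] .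
  then show ?case by (simp add: a_inst_subst \<tau>_def)
qed

end
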